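(* Let $(D,v^* )$ be a neighbor-acyclic instance of TFP (so $|V(D)|$ is a power of two) such that $D$ has no source. Let $A=N_{\mathrm{out}}(v^* )$ and $B=N_{\mathrm{in}}(v^* )$. If (1) $|A|\ge |V(D)|/3$ and (2) for every $b\in B$, $\mathrm{out}(b)\le \frac{|B|}{|A|}\,\mathrm{out}(v^* )$ (equivalently $\mathrm{out}(b)\le |B|$), then $(D,v^* )$ is a yes-instance.
   Context: A tournament is a digraph with exactly one arc between every pair of distinct vertices; $(u,v)$ means $u$ beats $v$. TFP: given a tournament $D$ with $|V(D)|$ a power of two and a player $v^*$, decide whether there is a seeding of a balanced knockout tournament (complete binary tree with $|V(D)|$ leaves, in each round sibling winners play and the winner according to $D$ advances) under which $v^*$ is the champion; if so the instance is a yes-instance. $\mathrm{out}(v)=|N_{\mathrm{out}}(v)|$ is the out-degree in $D$. An instance $(D,v^* )$ is neighbor-acyclic if $D[N_{\mathrm{in}}(v^* )]$ and $D[N_{\mathrm{out}}(v^* )]$ are both acyclic. A source is a vertex of in-degree $0$. *)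

theory Defs
  imports Complex_Main
begin

definition tournament :: "'a set \<Rightarrow> ('a \<Rightarrow> 'a \<Rightarrow> bool) \<Rightarrow> bool" where
  "tournament V beats \<longleftrightarrow> finite V \<and>
     (\<forall>u\<in>V. \<not> beats u u) \<and>
     (\<forall>u\<in>V. \<forall>v\<in>V. u \<noteq> v \<longrightarrow> (beats u v \<longleftrightarrow> \<not> beats v u))"

definition out_nbrs :: "'a set \<Rightarrow> ('a \<Rightarrow> 'a \<Rightarrow> bool) \<Rightarrow> 'a \<Rightarrow> 'a set" where
  "out_nbrs V beats v = {u \<in> V. beats v u}"

definition in_nbrs :: "'a set \<Rightarrow> ('a \<Rightarrow> 'a \<Rightarrow> bool) \<Rightarrow> 'a \<Rightarrow> 'a set" where
  "in_nbrs V beats v = {u \<in> V. beats u v}"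

definition out_deg :: "'a set \<Rightarrow> ('a \<Rightarrow> 'a \<Rightarrow> bool) \<Rightarrow> 'a \<Rightarrow> nat" where
  "out_deg V beats v = card (out_nbrs V beats v)"

definition induced_arcs :: "('a \<Rightarrow> 'a \<Rightarrow> bool) \<Rightarrow> 'a set \<Rightarrow> ('a \<times> 'a) set" where
  "induced_arcs beats S = {(u, w). u \<in> S \<and> w \<in> S \<and> beats u w}"

definition neighbor_acyclic :: "'a set \<Rightarrow> ('a \<Rightarrow> 'a \<Rightarrow> bool) \<Rightarrow> 'a \<Rightarrow> bool" where
  "neighbor_acyclic V beats v \<longleftrightarrow>
     acyclic (induced_arcs beats (in_nbrs V beats v)) \<and>
     acyclic (induced_arcs beats (out_nbrs V beats v))"

definition is_source :: "'a set \<Rightarrow> ('a \<Rightarrow> 'a \<Rightarrow> bool) \<Rightarrow> 'a \<Rightarrow> bool" where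
  "is_source V beats v \<longleftrightarrow> in_nbrs V beats v = {}"

text \<open>Winner of a balanced knockout tournament with 2^k leaves, seeded by the list xs
  (leaves left to right); in each round sibling winners play, the winner per beats advances.\<close>
fun ko_winner :: "('a \<Rightarrow> 'a \<Rightarrow> bool) \<Rightarrow> nat \<Rightarrow> 'a list \<Rightarrow> 'a" where
  "ko_winner beats 0 xs = hd xs"
| "ko_winner beats (Suc k) xs =
     (let a = ko_winner beats k (take (2 ^ k) xs);
          b = ko_winner beats k (drop (2 ^ k) xs)
      in if beats a b then a else b)"

definition yes_instance :: "'a set \<Rightarrow> ('a \<Rightarrow> 'a \<Rightarrow> bool) \<Rightarrow> 'a \<Rightarrow> bool" where
  "yes_instance V beats v \<longleftrightarrow>
     (\<exists>k xs. distinct xs \<and> set xs = V \<and> length xs = 2 ^ k \<and> ko_winner beats k xs = v)"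

end

theory Submission
  imports Defs
begin

lemma concat_pairs_take:
  "take (2*k) (concat (map (\<lambda>w. [w, p w]) ys)) = concat (map (\<lambda>w. [w, p w]) (take k ys))"
proof (induction ys arbitrary: k)
  case Nil then show ?case by simp
next
  case (Cons y ys) then show ?case by (cases k) auto
qed

lemma concat_pairs_drop:
  "drop (2*k) (concat (map (\<lambda>w. [w, p w]) ys)) = concat (map (\<lambda>w. [w, p w]) (drop k ys))"
proof (induction ys arbitrary: k)
  case Nil then show ?case by simp
next
  case (Cons y ys) then show ?case by (cases k) auto
qed

lemma concat_pairs_length:
  "length (concat (map (\<lambda>w. [w, p w]) ys)) = 2 * length ys"
  by (induction ys) auto

lemma ko_pairs:
  "length ys = 2 ^ m \<Longrightarrow> (\<forall>w\<in>set ys. beats w (p w)) \<Longrightarrow>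
   ko_winner beats (Suc m) (concat (map (\<lambda>w. [w, p w]) ys)) = ko_winner beats m ys"
proof (induction m arbitrary: ys)
  case 0
  then obtain w where "ys = [w]" by (cases ys) auto
  with 0 show ?case by simp
next
  case (Suc m)
  have t: "take (2 ^ Suc m) (concat (map (\<lambda>w. [w, p w]) ys)) = concat (map (\<lambda>w. [w, p w]) (take (2^m) ys))"
    using concat_pairs_take[of "2^m" p ys] by simp
  have d: "drop (2 ^ Suc m) (concat (map (\<lambda>w. [w, p w]) ys)) = concat (map (\<lambda>w. [w, p w]) (drop (2^m) ys))"
    using concat_pairs_drop[of "2^m" p ys] by simp
  have l1: "length (take (2^m) ys) = 2^m" using Suc.prems by simp
  have l2: "length (drop (2^m) ys) = 2^m" using Suc.prems by simp
  have s1: "\<forall>w\<in>set (take (2^m) ys). beats w (p w)" using Suc.prems by (meson in_set_takeD)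
  have s2: "\<forall>w\<in>set (drop (2^m) ys). beats w (p w)" using Suc.prems by (meson in_set_dropD)
  show ?case
    apply (subst ko_winner.simps)
    apply (subst t, subst d)
    apply (subst Suc.IH[OF l1 s1], subst Suc.IH[OF l2 s2])
    by simp
qed

fun pairs_of :: "'a list \<Rightarrow> ('a \<times> 'a) list" where
  "pairs_of (a # b # xs) = (a, b) # pairs_of xs"
| "pairs_of _ = []"

lemma pairs_of_length: "length (pairs_of zs) = length zs div 2"
  by (induction zs rule: pairs_of.induct) auto

lemma pairs_of_set: "even (length zs) \<Longrightarrow>
  set (map fst (pairs_of zs)) \<union> set (map snd (pairs_of zs)) = set zs"
  by (induction zs rule: pairs_of.induct) auto

lemma pairs_of_fst: "set (map fst (pairs_of zs)) \<subseteq> set zs"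
  by (induction zs rule: pairs_of.induct) auto

lemma pairs_of_beats: "sorted_wrt R zs \<Longrightarrow> (w, l) \<in> set (pairs_of zs) \<Longrightarrow> R w l"
  by (induction zs rule: pairs_of.induct) auto

lemma greedy:
  "(\<forall>j<x. finite (C j) \<and> x - j \<le> card (C j)) \<Longrightarrow>
   \<exists>ks. length ks = x \<and> distinct ks \<and> (\<forall>j<x. ks ! j \<in> C j)"
proof (induction x arbitrary: C)
  case 0 then show ?case by auto
next
  case (Suc x)
  have "\<forall>j<x. finite (C (Suc j)) \<and> x - j \<le> card (C (Suc j))" using Suc.prems by auto
  from Suc.IH[OF this] obtain ks where ks: "length ks = x" "distinct ks" "\<forall>j<x. ks ! j \<in> C (Suc j)" by blast
  have "card (set ks) < card (C 0)" using Suc.prems ks distinct_card[of ks] by fastforce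
  then have "\<not> C 0 \<subseteq> set ks" using card_mono[of "set ks" "C 0"] by auto
  then obtain k where k: "k \<in> C 0" "k \<notin> set ks" by blast
  show ?case
    apply (rule exI[of _ "k # ks"])
    using ks k by (auto simp: nth_Cons split: nat.splits)
qed

lemma arith_choice:
  fixes al be :: nat
  assumes "odd (al + be)" "al + be + 1 \<le> 3 * al"
  shows "\<exists>x. x \<le> be \<and> x + 1 \<le> al \<and> even (be - x) \<and> be + x \<le> 2 * al \<and>
             (4 \<le> al + be + 1 \<longrightarrow> be + 4 \<le> 2 * al + 3 * x)"
proof (cases "odd be")
  case True
  then show ?thesis using assms by (intro exI[of _ 1]) presburger
next
  case False
  show ?thesis
  proof (cases "be + 4 \<le> 2 * al")
    case True
    then show ?thesis using assms False by (intro exI[of _ 0]) presburger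
  next
    case F2: False
    show ?thesis
    proof (cases "be = 0")
      case True then show ?thesis using assms by (intro exI[of _ 0]) presburger
    next
      case False
      then show ?thesis using assms F2 \<open>\<not> odd be\<close> by (intro exI[of _ 2]) presburger
    qed
  qed
qed


locale ko_set =
  fixes V :: "'a set" and beats :: "'a \<Rightarrow> 'a \<Rightarrow> bool" and v :: 'a
  assumes tour: "tournament V beats"
    and vV: "v \<in> V"
    and acA: "acyclic (induced_arcs beats (out_nbrs V beats v))"
    and acB: "acyclic (induced_arcs beats (in_nbrs V beats v))"
begin

lemma finV: "finite V" using tour unfolding tournament_def by blast
lemma irr: "u \<in> V \<Longrightarrow> \<not> beats u u" using tour unfolding tournament_def by blast
lemma asym: "u \<in> V \<Longrightarrow> w \<in> V \<Longrightarrow> beats u w \<Longrightarrow> \<not> beats w u"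
  using tour unfolding tournament_def by metis
lemma total: "u \<in> V \<Longrightarrow> w \<in> V \<Longrightarrow> u \<noteq> w \<Longrightarrow> beats u w \<or> beats w u"
  using tour unfolding tournament_def by metis

lemma sorted_exists:
  "finite X \<Longrightarrow> X \<subseteq> V \<Longrightarrow> acyclic (induced_arcs beats X) \<Longrightarrow>
   \<exists>xs. distinct xs \<and> set xs = X \<and> sorted_wrt beats xs"
proof (induction X rule: finite_psubset_induct)
  case (psubset X)
  show ?case
  proof (cases "X = {}")
    case True then show ?thesis by auto
  next
    case False
    then obtain x0 where x0: "x0 \<in> X" by blast
    have fin: "finite (induced_arcs beats X)"
      by (rule finite_subset[of _ "X \<times> X"]) (auto simp: induced_arcs_def psubset.hyps)
    have wf: "wf (induced_arcs beats X)" using finite_acyclic_wf[OF fin psubset.prems(2)] .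
    obtain z where z: "z \<in> X" and zmin: "\<And>y. (y, z) \<in> induced_arcs beats X \<Longrightarrow> y \<notin> X"
      using wfE_min[OF wf x0] by blast
    have zb: "\<forall>y\<in>X - {z}. beats z y"
    proof
      fix y assume y: "y \<in> X - {z}"
      have "\<not> beats y z" using zmin[of y] y z by (auto simp: induced_arcs_def)
      then show "beats z y" using total[of z y] y z psubset.prems(1) by auto
    qed
    have ac: "acyclic (induced_arcs beats (X - {z}))"
      by (rule acyclic_subset[OF psubset.prems(2)]) (auto simp: induced_arcs_def)
    obtain xs where xs: "distinct xs" "set xs = X - {z}" "sorted_wrt beats xs"
      using psubset.IH[of "X - {z}"] z psubset.prems ac by blast
    show ?thesis
      by (rule exI[of _ "z # xs"]) (use xs zb z in auto)
  qed
qed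

lemma sorted_nth_beats:
  assumes "sorted_wrt beats xs" "distinct xs" "set xs \<subseteq> V" "i < length xs" "j < length xs"
  shows "beats (xs ! j) (xs ! i) \<longleftrightarrow> j < i"
proof
  assume b: "beats (xs ! j) (xs ! i)"
  show "j < i"
  proof (rule ccontr)
    assume "\<not> j < i"
    then consider "j = i" | "i < j" by linarith
    then show False
    proof cases
      case 1 then show ?thesis using b irr assms nth_mem by blast
    next
      case 2
      then have "beats (xs ! i) (xs ! j)" using assms sorted_wrt_iff_nth_less by blast
      then show ?thesis using b asym assms nth_mem by (meson subsetD)
    qed
  qed
next
  assume "j < i" then show "beats (xs ! j) (xs ! i)" using assms sorted_wrt_iff_nth_less by blast
qed

lemma sorted_rank:
  assumes "sorted_wrt beats xs" "distinct xs" "set xs \<subseteq> V" "i < length xs"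
  shows "card {b \<in> set xs. beats b (xs ! i)} = i"
proof -
  have "{b \<in> set xs. beats b (xs ! i)} = (\<lambda>j. xs ! j) ` {..<i}"
  proof (rule set_eqI, rule iffI)
    fix b assume "b \<in> {b \<in> set xs. beats b (xs ! i)}"
    then obtain j where j: "j < length xs" "b = xs ! j" "beats b (xs ! i)" by (auto simp: in_set_conv_nth)
    then have "j < i" using sorted_nth_beats assms by blast
    then show "b \<in> (\<lambda>j. xs ! j) ` {..<i}" using j by auto
  next
    fix b assume "b \<in> (\<lambda>j. xs ! j) ` {..<i}"
    then obtain j where j: "j < i" "b = xs ! j" by auto
    then show "b \<in> {b \<in> set xs. beats b (xs ! i)}" using sorted_nth_beats[OF assms(1-4), of j] assms by auto
  qed
  moreover have "inj_on (\<lambda>j. xs ! j) {..<i}" using assms(2,4) by (auto simp: inj_on_def nth_eq_iff_index_eq)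
  ultimately show ?thesis by (simp add: card_image)
qed

end

context ko_set begin

lemma arith_a1: fixes al be x :: nat shows "even (1+al+be) \<Longrightarrow> even (be-x) \<Longrightarrow> x \<le> be \<Longrightarrow> x+1 \<le> al \<Longrightarrow> even (al - x - 1)" by presburger
lemma arith_a2: fixes al be x be' :: nat shows "2*be'+x = be \<Longrightarrow> even (al-x-1) \<Longrightarrow> x+1 \<le> al \<Longrightarrow> 2*(1 + be' + x + (al-x-1) div 2) = 1+al+be" by presburger
lemma arith_a3: fixes be x be' :: nat shows "be' = (be - x) div 2 \<Longrightarrow> x \<le> be \<Longrightarrow> even (be - x) \<Longrightarrow> 2*be'+x = be" by presburger

definition AS where "AS S = {a \<in> S. beats v a}"
definition BS where "BS S = {b \<in> S. beats b v}"

definition inv where "inv m S \<longleftrightarrow> S \<subseteq> V \<and> v \<in> S \<and> card S = 2 ^ m \<and>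
   (2 \<le> card S \<longrightarrow> card S \<le> 3 * card (AS S)) \<and>
   (\<forall>b\<in>BS S. card {a \<in> AS S. beats b a} \<le> card {b' \<in> BS S. beats b' b})"

lemma step:
  assumes "inv (Suc m) S"
  shows "\<exists>S' ps. inv m S' \<and> S' = set (map fst ps) \<and> distinct (map fst ps @ map snd ps)
     \<and> set (map fst ps @ map snd ps) = S \<and> (\<forall>(w, l) \<in> set ps. beats w l)"
proof -
  define A where "A = AS S"
  define B where "B = BS S"
  define n where "n = card S"
  have SV: "S \<subseteq> V" and vS: "v \<in> S" and cS: "card S = 2 ^ Suc m"
    and c3: "card S \<le> 3 * card A" and invS: "\<forall>b\<in>B. card {a \<in> A. beats b a} \<le> card {b' \<in> B. beats b' b}"
    using assms unfolding inv_def A_def B_def by auto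
  have finS: "finite S" using SV finV finite_subset by blast
  have AV: "A \<subseteq> V" and BV: "B \<subseteq> V" using SV by (auto simp: A_def AS_def B_def BS_def)
  have vA: "v \<notin> A" and vB: "v \<notin> B" using irr vV by (auto simp: A_def AS_def B_def BS_def)
  have AB: "A \<inter> B = {}" using asym vV AV by (auto simp: A_def AS_def B_def BS_def)
  have Sdec: "S = insert v (A \<union> B)"
    using total vV SV vS by (auto simp: A_def AS_def B_def BS_def)
  have finA: "finite A" and finB: "finite B" using finS Sdec by auto
  have ncard: "n = 1 + card A + card B"
    using Sdec finA finB vA vB AB unfolding n_def by (simp add: card_Un_disjoint)
  have acAS: "acyclic (induced_arcs beats A)"
    by (rule acyclic_subset[OF acA]) (use SV in \<open>auto simp: induced_arcs_def A_def AS_def out_nbrs_def\<close>)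
  have acBS: "acyclic (induced_arcs beats B)"
    by (rule acyclic_subset[OF acB]) (use SV in \<open>auto simp: induced_arcs_def B_def BS_def in_nbrs_def\<close>)
  obtain as where as: "distinct as" "set as = A" "sorted_wrt beats as"
    using sorted_exists[OF finA AV acAS] by blast
  obtain bs where bs: "distinct bs" "set bs = B" "sorted_wrt beats bs"
    using sorted_exists[OF finB BV acBS] by blast
  define al where "al = card A"
  define be where "be = card B"
  have las: "length as = al" using as distinct_card al_def by metis
  have lbs: "length bs = be" using bs distinct_card be_def by metis
  have rank: "i < be \<Longrightarrow> card {b' \<in> B. beats b' (bs ! i)} = i" for i
    using sorted_rank[of bs i] bs BV lbs by auto
  have inA: "i < be \<Longrightarrow> al - i \<le> card {a \<in> A. beats a (bs ! i)}" for i
  proof -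
    assume i: "i < be"
    have bi: "bs ! i \<in> B" using i lbs bs nth_mem by metis
    have "card {a \<in> A. beats (bs ! i) a} \<le> i" using invS bi rank[OF i] by metis
    moreover have "A = {a \<in> A. beats (bs ! i) a} \<union> {a \<in> A. beats a (bs ! i)}"
      using total bi AB AV BV by blast
    then have "al \<le> card {a \<in> A. beats (bs ! i) a} + card {a \<in> A. beats a (bs ! i)}"
      unfolding al_def by (metis card_Un_le)
    ultimately show ?thesis by linarith
  qed
  have neven: "even n" using cS n_def by simp
  have n2: "2 \<le> n" using cS n_def by (simp add: Suc_le_eq)
  obtain x where x: "x \<le> be" "x + 1 \<le> al" "even (be - x)" "be + x \<le> 2 * al"
      "4 \<le> al + be + 1 \<longrightarrow> be + 4 \<le> 2 * al + 3 * x"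
    using arith_choice[of al be] neven n2 c3 ncard al_def be_def n_def by auto
  define be' where "be' = (be - x) div 2"
  have be'x: "2 * be' + x = be" using arith_a3[OF be'_def x(1) x(3)] .
  have albe: "be' + x \<le> al" using x(4) be'x by linarith
  define C where "C j = {a \<in> A. beats a (bs ! (be' + j))}" for j
  have "\<forall>j<x. finite (C j) \<and> x - j \<le> card (C j)"
  proof (intro allI impI conjI)
    fix j assume j: "j < x"
    show "finite (C j)" using finA C_def by auto
    have "be' + j < be" using j be'x by linarith
    then have "al - (be' + j) \<le> card (C j)" using inA C_def by auto
    then show "x - j \<le> card (C j)" using albe by linarith
  qed
  from greedy[OF this] obtain ks where ks: "length ks = x" "distinct ks" "\<forall>j<x. ks ! j \<in> C j" by blast
  have ksA: "set ks \<subseteq> A" using ks C_def by (auto simp: in_set_conv_nth)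
  define rem where "rem = filter (\<lambda>a. a \<notin> set ks) as"
  have setrem: "set rem = A - set ks" using rem_def as by auto
  have distrem: "distinct rem" using rem_def as by auto
  have lrem: "length rem = al - x"
  proof -
    have "length rem = card (A - set ks)" using distrem setrem distinct_card by metis
    also have "\<dots> = al - x" using ksA finA ks distinct_card al_def by (metis card_Diff_subset finite_set)
    finally show ?thesis .
  qed
  have remne: "rem \<noteq> []" using lrem x(2) by auto
  have sortrem: "sorted_wrt beats rem" using as rem_def sorted_wrt_filter by blast
  have sorttl: "sorted_wrt beats (tl rem)" using sortrem by (cases rem) auto
  have ltl: "length (tl rem) = al - x - 1" using lrem by simp
  have nab: "n = 1 + al + be" using ncard al_def be_def by simp
  have eventl: "even (length (tl rem))" using ltl arith_a1[of al be x] neven nab x by simp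
  define P1 where "P1 = zip (take be' bs) (drop (be' + x) bs)"
  define P2 where "P2 = zip ks (take x (drop be' bs))"
  define P3 where "P3 = pairs_of (tl rem)"
  define ps where "ps = (v, hd rem) # P1 @ P2 @ P3"
  have l_tk: "length (take be' bs) = be'" using lbs be'x by simp
  have l_dr: "length (drop (be' + x) bs) = be'" using lbs be'x by simp
  have l_t2: "length (take x (drop be' bs)) = x" using lbs be'x by simp
  have f1: "map fst P1 = take be' bs" and s1: "map snd P1 = drop (be' + x) bs"
    using l_tk l_dr P1_def by auto
  have f2: "map fst P2 = ks" and s2: "map snd P2 = take x (drop be' bs)"
    using l_t2 ks P2_def by auto
  have lps: "2 * length ps = n"
  proof -
    have "length ps = 1 + be' + x + (al - x - 1) div 2"
      using ps_def P1_def P2_def P3_def l_tk l_dr l_t2 ks pairs_of_length[of "tl rem"] ltl by simp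
    then have "2 * length ps = 2 * (1 + be' + x + (al - x - 1) div 2)" by simp
    also have "\<dots> = 1 + al + be"
      using arith_a2[of be' x be al] be'x eventl ltl x(2) by (metis (no_types, lifting))
    finally show ?thesis using nab by simp
  qed
  define L where "L = map fst ps @ map snd ps"
  have setfst: "set (map fst ps) = insert v (set (take be' bs) \<union> set ks \<union> set (map fst P3))"
    using ps_def f1 f2 by auto
  have setsnd: "set (map snd ps) = insert (hd rem) (set (drop (be' + x) bs) \<union> set (take x (drop be' bs)) \<union> set (map snd P3))"
    using ps_def s1 s2 by auto
  have P3set: "set (map fst P3) \<union> set (map snd P3) = set (tl rem)"
    using pairs_of_set[OF eventl] P3_def by simp
  have bsplit: "set bs = set (take be' bs) \<union> set (take x (drop be' bs)) \<union> set (drop (be' + x) bs)"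
  proof -
    have "bs = take be' bs @ take x (drop be' bs) @ drop x (drop be' bs)"
      by (simp only: append_take_drop_id)
    then have "set bs = set (take be' bs) \<union> set (take x (drop be' bs)) \<union> set (drop x (drop be' bs))"
      by (metis Un_assoc set_append)
    then show ?thesis by (simp add: add.commute)
  qed
  have remsplit: "set rem = insert (hd rem) (set (tl rem))" using remne by (cases rem) auto
  have tlA: "set (tl rem) \<subseteq> A" using setrem remne by (cases rem) auto
  have hdA: "hd rem \<in> A" using setrem remne by (cases rem) auto
  have SL: "S \<subseteq> set L"
  proof -
    have "A \<subseteq> set L" using setrem remsplit P3set setfst setsnd unfolding L_def by auto
    moreover have "B \<subseteq> set L" using bs bsplit setfst setsnd unfolding L_def by auto
    ultimately show ?thesis using Sdec setfst L_def by auto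
  qed
  have LS: "set L \<subseteq> S"
  proof -
    have "set bs \<subseteq> S" using bs Sdec by auto
    then have "set (take be' bs) \<subseteq> S" "set (take x (drop be' bs)) \<subseteq> S" "set (drop (be' + x) bs) \<subseteq> S"
      using bsplit by auto
    moreover have "set (tl rem) \<subseteq> S" "hd rem \<in> S" "set ks \<subseteq> S" using tlA hdA ksA Sdec by auto
    ultimately show ?thesis using P3set setfst setsnd vS unfolding L_def by auto
  qed
  have setL: "set L = S" using SL LS by auto
  have lL: "length L = n" using lps L_def by simp
  have distL: "distinct L" using setL lL n_def card_distinct by metis
  have beatsps: "\<forall>(w, l) \<in> set ps. beats w l"
  proof
    fix p assume p: "p \<in> set ps"
    obtain w l where wl: "p = (w, l)" by force
    have "beats w l"
    proof -
      consider "(w, l) = (v, hd rem)" | "(w, l) \<in> set P1" | "(w, l) \<in> set P2" | "(w, l) \<in> set P3"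
        using p wl ps_def by auto
      then show ?thesis
      proof cases
        case 1 then show ?thesis using hdA by (auto simp: A_def AS_def)
      next
        case 2
        then obtain i where i: "i < be'" "w = take be' bs ! i" "l = drop (be' + x) bs ! i"
          using l_tk l_dr P1_def by (auto simp: set_zip)
        have "w = bs ! i" "l = bs ! (be' + x + i)" using i lbs be'x by auto
        moreover have "i < be' + x + i" "be' + x + i < length bs" using i lbs be'x by auto
        ultimately show ?thesis using bs(3) sorted_wrt_iff_nth_less by metis
      next
        case 3
        then obtain j where j: "j < x" "w = ks ! j" "l = take x (drop be' bs) ! j"
          using l_t2 ks P2_def by (auto simp: set_zip)
        have "l = bs ! (be' + j)" using j lbs be'x by auto
        then show ?thesis using ks(3) j C_def by auto
      next
        case 4 then show ?thesis using pairs_of_beats[OF sorttl] P3_def by auto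
      qed
    qed
    then show "case p of (w, l) \<Rightarrow> beats w l" using wl by simp
  qed
  define S' where "S' = set (map fst ps)"
  have distfst: "distinct (map fst ps)" using distL L_def by simp
  have cS': "card S' = 2 ^ m"
  proof -
    have "card S' = length ps" using distfst S'_def distinct_card by (metis length_map)
    then show ?thesis using lps n_def cS by simp
  qed
  have S'S: "S' \<subseteq> S" using setL L_def S'_def by auto
  have BS': "BS S' = set (take be' bs)"
  proof -
    have "set (take be' bs) \<subseteq> B" using set_take_subset[of be' bs] bs(2) by simp
    moreover have "set (map fst P3) \<subseteq> A" using pairs_of_fst[of "tl rem"] tlA unfolding P3_def by (rule subset_trans)
    then have "set ks \<union> set (map fst P3) \<subseteq> A" using ksA by simp
    moreover have "S' \<subseteq> S" by (rule S'S)
    ultimately have h: "S' = insert v (set (take be' bs) \<union> (set ks \<union> set (map fst P3)))"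
      and h2: "set (take be' bs) \<subseteq> B" and h3: "set ks \<union> set (map fst P3) \<subseteq> A"
      using setfst S'_def by auto
    show ?thesis
    proof (rule set_eqI, rule iffI)
      fix b assume b: "b \<in> BS S'"
      then have bS': "b \<in> S'" and bv: "beats b v" by (auto simp: BS_def)
      then have "b \<in> B" using S'S by (auto simp: B_def BS_def)
      then have "b \<noteq> v" "b \<notin> A" using vB AB by auto
      then show "b \<in> set (take be' bs)" using bS' h h3 by blast
    next
      fix b assume b: "b \<in> set (take be' bs)"
      then have "b \<in> S'" "b \<in> B" using h h2 by auto
      then show "b \<in> BS S'" by (auto simp: B_def BS_def)
    qed
  qed
  have S'dec: "S' \<subseteq> insert v (AS S' \<union> BS S')"
  proof
    fix u assume u: "u \<in> S'"
    then have "u \<in> V" using S'S SV by blast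
    then show "u \<in> insert v (AS S' \<union> BS S')" using total[of u v] vV u unfolding AS_def BS_def by blast
  qed
  have finS': "finite S'" using S'_def by simp
  have c3': "2 \<le> card S' \<longrightarrow> card S' \<le> 3 * card (AS S')"
  proof
    assume c2: "2 \<le> card S'"
    have fAS: "finite (AS S')" and fBS: "finite (BS S')" using finS' by (auto simp: AS_def BS_def)
    have "card S' \<le> card (insert v (AS S' \<union> BS S'))" using card_mono[OF _ S'dec] fAS fBS by simp
    also have "\<dots> \<le> Suc (card (AS S' \<union> BS S'))" using fAS fBS by (simp add: card_insert_if)
    also have "\<dots> \<le> 1 + card (AS S') + card (BS S')" using card_Un_le[of "AS S'" "BS S'"] by simp
    also have "card (BS S') = be'"
    proof -
      have "distinct (take be' bs)" using bs(1) by simp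
      then show ?thesis using BS' l_tk distinct_card by metis
    qed
    finally have c1: "card S' \<le> 1 + card (AS S') + be'" .
    have c2n: "2 * card S' = n" using cS' cS n_def by simp
    then have "4 \<le> n" using c2 by linarith
    then have "be + 4 \<le> 2 * al + 3 * x" using x(5) nab by simp
    then show "card S' \<le> 3 * card (AS S')"
      using c1 c2n nab be'x by linarith
  qed
  have inv': "\<forall>b\<in>BS S'. card {a \<in> AS S'. beats b a} \<le> card {b' \<in> BS S'. beats b' b}"
  proof
    fix b assume b: "b \<in> BS S'"
    then obtain i where i: "i < be'" "b = bs ! i" using BS' l_tk by (auto simp: in_set_conv_nth)
    have ib: "i < be" using i be'x by linarith
    have bB: "b \<in> B" using i ib lbs bs nth_mem by metis
    have "card {a \<in> AS S'. beats b a} \<le> card {a \<in> A. beats b a}"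
      by (rule card_mono) (use finA S'S in \<open>auto simp: AS_def A_def\<close>, use finS in simp)
    also have "\<dots> \<le> card {b' \<in> B. beats b' b}" using invS bB by blast
    also have "\<dots> \<le> card {b' \<in> BS S'. beats b' b}"
    proof (rule card_mono)
      show "finite {b' \<in> BS S'. beats b' b}" using finS' by (simp add: BS_def)
      show "{b' \<in> B. beats b' b} \<subseteq> {b' \<in> BS S'. beats b' b}"
      proof
        fix b' assume b': "b' \<in> {b' \<in> B. beats b' b}"
        then obtain j where j: "j < be" "b' = bs ! j" using bs lbs by (auto simp: in_set_conv_nth)
        have "j < i" using sorted_nth_beats[OF bs(3) bs(1), of i j] bs BV lbs ib j b' i by auto
        then have "b' \<in> set (take be' bs)" using j i lbs by (auto simp: in_set_conv_nth)
        then show "b' \<in> {b' \<in> BS S'. beats b' b}" using BS' b' by auto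
      qed
    qed
    finally show "card {a \<in> AS S'. beats b a} \<le> card {b' \<in> BS S'. beats b' b}" .
  qed
  have "inv m S'" unfolding inv_def using S'S SV cS' c3' inv' setfst S'_def by auto
  then show ?thesis using distL setL beatsps S'_def L_def by blast
qed

end

context ko_set begin

lemma main: "inv m S \<Longrightarrow> \<exists>xs. distinct xs \<and> set xs = S \<and> length xs = 2 ^ m \<and> ko_winner beats m xs = v"
proof (induction m arbitrary: S)
  case 0
  then have "card S = 1" "v \<in> S" by (auto simp: inv_def)
  then have "S = {v}" by (metis card_1_singletonE singletonD)
  then show ?case by (intro exI[of _ "[v]"]) simp
next
  case (Suc m)
  obtain S' ps where st: "inv m S'" "S' = set (map fst ps)" "distinct (map fst ps @ map snd ps)"
     "set (map fst ps @ map snd ps) = S" "\<forall>(w, l) \<in> set ps. beats w l"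
    using step[OF Suc.prems] by blast
  obtain ys where ys: "distinct ys" "set ys = S'" "length ys = 2 ^ m" "ko_winner beats m ys = v"
    using Suc.IH[OF st(1)] by blast
  define p where "p w = the (map_of ps w)" for w
  have df: "distinct (map fst ps)" using st(3) by simp
  have pw: "w \<in> S' \<Longrightarrow> (w, p w) \<in> set ps" for w
  proof -
    assume "w \<in> S'"
    then have "map_of ps w \<noteq> None" using st(2) by (simp add: map_of_eq_None_iff)
    then obtain l where l: "map_of ps w = Some l" by blast
    then have "(w, l) \<in> set ps" using map_of_eq_Some_iff[OF df] by blast
    moreover have "p w = l" using l p_def by simp
    ultimately show ?thesis by simp
  qed
  define xs where "xs = concat (map (\<lambda>w. [w, p w]) ys)"
  have lx: "length xs = 2 ^ Suc m" unfolding xs_def concat_pairs_length using ys(3) by simp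
  have bw: "\<forall>w\<in>set ys. beats w (p w)" using pw st(5) ys(2) by fastforce
  have kw: "ko_winner beats (Suc m) xs = v" using ko_pairs[of ys m beats p, OF ys(3) bw] ys(4) xs_def by simp
  have setxs: "set xs = set ys \<union> p ` set ys" unfolding xs_def by auto
  have "set xs \<subseteq> S"
  proof -
    have "set ys \<subseteq> S" using ys(2) st(2,4) by auto
    moreover have "p ` set ys \<subseteq> S" using pw ys(2) st(4) by force
    ultimately show ?thesis using setxs by auto
  qed
  moreover have "S \<subseteq> set xs"
  proof
    fix u assume "u \<in> S"
    then consider "u \<in> set (map fst ps)" | "u \<in> set (map snd ps)" using st(4) by auto
    then show "u \<in> set xs"
    proof cases
      case 1 then show ?thesis using setxs ys(2) st(2) by auto
    next
      case 2
      then obtain w where w: "(w, u) \<in> set ps" by auto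
      then have "w \<in> S'" using st(2) by force
      have "map_of ps w = Some u" using map_of_eq_Some_iff[OF df] w by blast
      then have "p w = u" using p_def by simp
      then show ?thesis using setxs ys(2) \<open>w \<in> S'\<close> by auto
    qed
  qed
  ultimately have sx: "set xs = S" by blast
  have "card S = 2 ^ Suc m" using Suc.prems by (simp add: inv_def)
  then have "distinct xs" using card_distinct sx lx by metis
  then show ?case using sx lx kw by blast
qed

end


theorem theorem5:
  fixes V :: "'a set" and beats :: "'a \<Rightarrow> 'a \<Rightarrow> bool" and v :: 'a
  assumes "tournament V beats"
    and "\<exists>k. card V = 2 ^ k"
    and "v \<in> V"
    and "neighbor_acyclic V beats v"
    and "\<forall>u\<in>V. \<not> is_source V beats u"
    and "3 * card (out_nbrs V beats v) \<ge> card V"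
    and "\<forall>b\<in>in_nbrs V beats v.
           real (out_deg V beats b)
             \<le> real (card (in_nbrs V beats v)) / real (card (out_nbrs V beats v))
               * real (out_deg V beats v)"
  shows "yes_instance V beats v"
proof -
  interpret ko_set V beats v
    using assms(1,3,4) by unfold_locales (auto simp: neighbor_acyclic_def)
  obtain k where k: "card V = 2 ^ k" using assms(2) by blast
  define A where "A = out_nbrs V beats v"
  define B where "B = in_nbrs V beats v"
  have ASV: "AS V = A" and BSV: "BS V = B"
    by (auto simp: AS_def BS_def A_def B_def out_nbrs_def in_nbrs_def)
  have finA: "finite A" and finB: "finite B" using finV by (auto simp: A_def B_def out_nbrs_def in_nbrs_def)
  have "0 < card V" using finV vV card_gt_0_iff by blast
  then have apos: "0 < card A" using assms(6) unfolding A_def by linarith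
  have "\<forall>b\<in>B. card {a \<in> A. beats b a} \<le> card {b' \<in> B. beats b' b}"
  proof
    fix b assume b: "b \<in> B"
    have bV: "b \<in> V" and bv: "beats b v" using b by (auto simp: B_def in_nbrs_def)
    have vA: "v \<notin> A" and vB: "v \<notin> B" using irr vV by (auto simp: A_def B_def out_nbrs_def in_nbrs_def)
    have AB: "A \<inter> B = {}" using asym vV by (auto simp: A_def B_def out_nbrs_def in_nbrs_def)
    have "real (out_deg V beats b) \<le> real (card B) / real (card A) * real (card A)"
      using assms(7) b unfolding A_def B_def out_deg_def by blast
    also have "\<dots> = real (card B)" using apos by simp
    finally have od: "out_deg V beats b \<le> card B" by simp
    define F where "F = {a \<in> A. beats b a}"
    define Ob where "Ob = {b' \<in> B. beats b b'}"
    define G where "G = {b' \<in> B. beats b' b}"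
    have fF: "finite F" "finite Ob" "finite G" using finA finB by (auto simp: F_def Ob_def G_def)
    have "insert v (F \<union> Ob) \<subseteq> out_nbrs V beats b"
      using bv vV by (auto simp: F_def Ob_def A_def B_def out_nbrs_def in_nbrs_def)
    moreover have "card (insert v (F \<union> Ob)) = 1 + card F + card Ob"
    proof -
      have "F \<inter> Ob = {}" using AB by (auto simp: F_def Ob_def)
      then have "card (F \<union> Ob) = card F + card Ob" using fF card_Un_disjoint by blast
      moreover have "v \<notin> F \<union> Ob" using vA vB by (auto simp: F_def Ob_def)
      ultimately show ?thesis using fF by simp
    qed
    moreover have "finite (out_nbrs V beats b)" using finV by (simp add: out_nbrs_def)
    ultimately have c1: "1 + card F + card Ob \<le> card B"
      using od card_mono unfolding out_deg_def by (metis le_trans)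
    have "B \<subseteq> insert b (Ob \<union> G)"
    proof
      fix u assume u: "u \<in> B"
      then have "u \<in> V" by (auto simp: B_def in_nbrs_def)
      then show "u \<in> insert b (Ob \<union> G)" using total[of u b] bV u by (auto simp: Ob_def G_def)
    qed
    then have "card B \<le> card (insert b (Ob \<union> G))" using card_mono fF by (metis finite_Un finite_insert)
    also have "\<dots> \<le> Suc (card (Ob \<union> G))" using fF by (simp add: card_insert_if)
    also have "\<dots> \<le> 1 + card Ob + card G" using card_Un_le[of Ob G] by simp
    finally show "card F \<le> card G" using c1 unfolding F_def G_def by linarith
  qed
  then have "inv k V" unfolding inv_def using k vV assms(6) ASV BSV A_def by auto
  from main[OF this] show ?thesis unfolding yes_instance_def by blast
qed

end
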